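(* Let $\mathfrak g=\mathfrak g(\mathfrak l,V,\mathfrak z,\beta)$ be an admissible Lie algebra and let $x\in\mathfrak g$ be such that $\operatorname{co}(x)$ is pointed. Then $\mathcal O_x\cap(\mathfrak z+\mathfrak l)\neq\emptyset$, i.e. $x$ is conjugate under $\operatorname{Inn}(\mathfrak g)$ to an element of $\mathfrak z+\mathfrak l$.
   Context: All Lie algebras are finite-dimensional and real. $\operatorname{Inn}(\mathfrak g)$ is the group generated by $e^{\operatorname{ad}y}$, $y\in\mathfrak g$; $\mathcal O_x=\operatorname{Inn}(\mathfrak g)x$; $\operatorname{co}(x)$ is the closed convex hull of $\mathcal O_x$. A closed convex subset of a finite-dimensional real vector space is pointed if it contains no affine line, and generating if it spans the space. $\mathfrak g$ is admissible if it contains an $\operatorname{Inn}(\mathfrak g)$-invariant pointed generating closed convex subset. For a reductive Lie algebra $\mathfrak l$, an $\mathfrak l$-module $V$, a real vector space $\mathfrak z$ and an $\mathfrak l$-invariant skew-symmetric bilinear map $\beta:V\times V\to\mathfrak z$, $\mathfrak g(\mathfrak l,V,\mathfrak z,\beta)$ is $\mathfrak z\oplus V\oplus\mathfrak l$ with bracket $[(z,v,x),(z',v',x')]=(\beta(v,v'),x.v'-x'.v,[x,x'])$. Standing facts: every admissible Lie algebra is of this form with $\mathfrak z=\mathfrak z(\mathfrak g)$ the center, $\mathfrak z\oplus V$ the maximal nilpotent ideal, $\mathfrak l$ reductive with every simple ideal compact or hermitian, $\mathfrak l$ containing a compactly embedded Cartan subalgebra $\mathfrak t_{\mathfrak l}$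 such that $\mathfrak t=\mathfrak z+\mathfrak t_{\mathfrak l}$ is a compactly embedded Cartan subalgebra of $\mathfrak g$, $V=[\mathfrak t_{\mathfrak l},V]$, and there is $f\in\mathfrak z^*$ such that $f\circ\beta$ is a symplectic form on $V$ and $v\mapsto f(\beta(y.v,v))$ is positive definite for some $y\in\mathfrak l$. *)

theory Defs
  imports "HOL-Analysis.Analysis"
begin

text \<open>A finite-dimensional real Lie algebra is modelled as a Euclidean space type
 'g with a bracket br. Subalgebras, ideals etc. are subsets of 'g.\<close>

definition lie_algebra :: "('g::euclidean_space \<Rightarrow> 'g \<Rightarrow> 'g) \<Rightarrow> bool" where
  "lie_algebra br \<longleftrightarrow> bilinear br \<and> (\<forall>x. br x x = 0) \<and>
     (\<forall>x y z. br x (br y z) + br y (br z x) + br z (br x y) = 0)"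

definition ssum :: "'g::real_vector set \<Rightarrow> 'g set \<Rightarrow> 'g set" where
  "ssum A B = {a + b | a b. a \<in> A \<and> b \<in> B}"

definition exp_ad :: "('g::euclidean_space \<Rightarrow> 'g \<Rightarrow> 'g) \<Rightarrow> 'g \<Rightarrow> 'g \<Rightarrow> 'g" where
  "exp_ad br y u = (\<Sum>n. ((br y) ^^ n) u /\<^sub>R fact n)"

text \<open>Group generated by the maps e^{ad y}, y in K, restricted to the (invariant)
 subspace S (as maps that vanish outside S).\<close>
inductive_set inn_on :: "('g::euclidean_space \<Rightarrow> 'g \<Rightarrow> 'g) \<Rightarrow> 'g set \<Rightarrow> 'g set \<Rightarrow> ('g \<Rightarrow> 'g) set"
  for br S K where
  base: "(\<lambda>u. if u \<in> S then u else 0) \<in> inn_on br S K"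
| step: "\<phi> \<in> inn_on br S K \<Longrightarrow> y \<in> K \<Longrightarrow> (exp_ad br y \<circ> \<phi>) \<in> inn_on br S K"

abbreviation Inn :: "('g::euclidean_space \<Rightarrow> 'g \<Rightarrow> 'g) \<Rightarrow> ('g \<Rightarrow> 'g) set" where
  "Inn br \<equiv> inn_on br UNIV UNIV"

definition orbit :: "('g::euclidean_space \<Rightarrow> 'g \<Rightarrow> 'g) \<Rightarrow> 'g \<Rightarrow> 'g set" where
  "orbit br x = {\<phi> x | \<phi>. \<phi> \<in> Inn br}"

definition co :: "('g::euclidean_space \<Rightarrow> 'g \<Rightarrow> 'g) \<Rightarrow> 'g \<Rightarrow> 'g set" where
  "co br x = closure (convex hull (orbit br x))"

definition pointed :: "'g::real_vector set \<Rightarrow> bool" where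
  "pointed C \<longleftrightarrow> \<not> (\<exists>p v. v \<noteq> 0 \<and> (\<forall>t::real. p + t *\<^sub>R v \<in> C))"

definition generating :: "'g::real_vector set \<Rightarrow> bool" where
  "generating C \<longleftrightarrow> span C = UNIV"

definition admissible :: "('g::euclidean_space \<Rightarrow> 'g \<Rightarrow> 'g) \<Rightarrow> bool" where
  "admissible br \<longleftrightarrow> (\<exists>C. closed C \<and> convex C \<and> (\<forall>\<phi>\<in>Inn br. \<phi> ` C \<subseteq> C)
      \<and> pointed C \<and> generating C)"

definition subalg :: "('g::euclidean_space \<Rightarrow> 'g \<Rightarrow> 'g) \<Rightarrow> 'g set \<Rightarrow> bool" where
  "subalg br S \<longleftrightarrow> subspace S \<and> (\<forall>x\<in>S. \<forall>y\<in>S. br x y \<in> S)"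

definition ideal_in :: "('g::euclidean_space \<Rightarrow> 'g \<Rightarrow> 'g) \<Rightarrow> 'g set \<Rightarrow> 'g set \<Rightarrow> bool" where
  "ideal_in br S I \<longleftrightarrow> subspace I \<and> I \<subseteq> S \<and> (\<forall>x\<in>S. \<forall>y\<in>I. br x y \<in> I)"

definition center_of :: "('g::euclidean_space \<Rightarrow> 'g \<Rightarrow> 'g) \<Rightarrow> 'g set \<Rightarrow> 'g set" where
  "center_of br S = {z\<in>S. \<forall>x\<in>S. br z x = 0}"

definition nilpotent_la :: "('g::euclidean_space \<Rightarrow> 'g \<Rightarrow> 'g) \<Rightarrow> 'g set \<Rightarrow> bool" where
  "nilpotent_la br N \<longleftrightarrow> (\<exists>k. \<forall>xs y. length xs = k \<longrightarrow> set xs \<subseteq> N \<longrightarrow> y \<in> N \<longrightarrow> foldr br xs y = 0)"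

definition max_nilpotent_ideal :: "('g::euclidean_space \<Rightarrow> 'g \<Rightarrow> 'g) \<Rightarrow> 'g set \<Rightarrow> bool" where
  "max_nilpotent_ideal br N \<longleftrightarrow> ideal_in br UNIV N \<and> nilpotent_la br N \<and>
     (\<forall>M. ideal_in br UNIV M \<and> nilpotent_la br M \<and> N \<subseteq> M \<longrightarrow> M = N)"

definition cartan_in :: "('g::euclidean_space \<Rightarrow> 'g \<Rightarrow> 'g) \<Rightarrow> 'g set \<Rightarrow> 'g set \<Rightarrow> bool" where
  "cartan_in br S H \<longleftrightarrow> subalg br H \<and> H \<subseteq> S \<and> nilpotent_la br H \<and>
     {x\<in>S. \<forall>h\<in>H. br x h \<in> H} = H"

text \<open>reductive: the adjoint representation is semisimple, i.e. every ideal has a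
 complementary ideal\<close>
definition reductive_on :: "('g::euclidean_space \<Rightarrow> 'g \<Rightarrow> 'g) \<Rightarrow> 'g set \<Rightarrow> bool" where
  "reductive_on br S \<longleftrightarrow> subalg br S \<and>
     (\<forall>I. ideal_in br S I \<longrightarrow> (\<exists>J. ideal_in br S J \<and> I \<inter> J = {0} \<and> ssum I J = S))"

definition simple_ideal :: "('g::euclidean_space \<Rightarrow> 'g \<Rightarrow> 'g) \<Rightarrow> 'g set \<Rightarrow> 'g set \<Rightarrow> bool" where
  "simple_ideal br S I \<longleftrightarrow> ideal_in br S I \<and> (\<exists>x\<in>I. \<exists>y\<in>I. br x y \<noteq> 0) \<and>
     (\<forall>J. ideal_in br I J \<longrightarrow> J = {0} \<or> J = I)"

text \<open>K is compactly embedded in the Lie algebra S: the closure of the group generated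
 by e^{ad y}|_S, y in K, is compact (topology of pointwise convergence = norm topology
 on linear maps of the finite-dimensional space).\<close>
definition compactly_embedded :: "('g::euclidean_space \<Rightarrow> 'g \<Rightarrow> 'g) \<Rightarrow> 'g set \<Rightarrow> 'g set \<Rightarrow> bool" where
  "compactly_embedded br S K \<longleftrightarrow> subalg br K \<and> K \<subseteq> S \<and> compact (closure (inn_on br S K))"

definition compact_la :: "('g::euclidean_space \<Rightarrow> 'g \<Rightarrow> 'g) \<Rightarrow> 'g set \<Rightarrow> bool" where
  "compact_la br I \<longleftrightarrow> compactly_embedded br I I"

definition max_compactly_embedded :: "('g::euclidean_space \<Rightarrow> 'g \<Rightarrow> 'g) \<Rightarrow> 'g set \<Rightarrow> 'g set \<Rightarrow> bool" where
  "max_compactly_embedded br S K \<longleftrightarrow> compactly_embedded br S K \<and>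
     (\<forall>K'. compactly_embedded br S K' \<and> K \<subseteq> K' \<longrightarrow> K' = K)"

definition hermitian_la :: "('g::euclidean_space \<Rightarrow> 'g \<Rightarrow> 'g) \<Rightarrow> 'g set \<Rightarrow> bool" where
  "hermitian_la br I \<longleftrightarrow> \<not> compact_la br I \<and>
     (\<exists>K. max_compactly_embedded br I K \<and> center_of br K \<noteq> {0})"

end

theory Submission
  imports Defs
begin

lemma funpow_linear_zero: fixes g :: "'a::real_vector \<Rightarrow> 'a" shows "linear g \<Longrightarrow> (g ^^ k) 0 = 0"
  by (induction k) (auto simp: linear_0)

lemma exp_ad_trunc:
  assumes lin: "linear (br y)" and z3: "br y (br y (br y u)) = 0"
  shows "exp_ad br y u = u + br y u + (1/2) *\<^sub>R br y (br y u)"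
proof -
  have "((br y) ^^ n) u = 0" if "n \<notin> {0,1,2}" for n
  proof -
    from that have "n = (n - 3) + 3" by auto
    then have "((br y) ^^ n) u = ((br y) ^^ (n-3)) (((br y) ^^ 3) u)"
      by (metis comp_apply funpow_add)
    also have "((br y) ^^ 3) u = 0" using z3 by (simp add: numeral_3_eq_3)
    finally show ?thesis using funpow_linear_zero[OF lin] by simp
  qed
  then have "exp_ad br y u = (\<Sum>n\<in>{0,1,2}. ((br y) ^^ n) u /\<^sub>R fact n)"
    unfolding exp_ad_def by (intro suminf_finite) auto
  also have "\<dots> = u + br y u + (1/2) *\<^sub>R br y (br y u)"
    by (simp add: numeral_2_eq_2)
  finally show ?thesis .
qed

lemma exp_ad_in_orbit: "exp_ad br y x \<in> orbit br x"
proof -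
  have "(\<lambda>u. if u \<in> UNIV then u else 0) \<in> Inn br" by (rule inn_on.base)
  then have "exp_ad br y \<circ> (\<lambda>u. if u \<in> UNIV then u else 0) \<in> Inn br"
    by (rule inn_on.step) simp
  moreover have "exp_ad br y x = (exp_ad br y \<circ> (\<lambda>u. if u \<in> UNIV then u else 0)) x" by simp
  ultimately show ?thesis unfolding orbit_def by blast
qed

theorem theorem3p4:
  fixes br :: "'g::euclidean_space \<Rightarrow> 'g \<Rightarrow> 'g"
    and Z V L T :: "'g set" and x :: 'g
  assumes lie: "lie_algebra br"
    and subsp: "subspace Z" "subspace V" "subspace L"
    and dsum: "\<forall>g. \<exists>!(z, v, l). z \<in> Z \<and> v \<in> V \<and> l \<in> L \<and> g = z + v + l"
    and VV: "\<forall>v\<in>V. \<forall>w\<in>V. br v w \<in> Z"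
    and LV: "\<forall>l\<in>L. \<forall>v\<in>V. br l v \<in> V"
    and Lsub: "subalg br L"
    and adm: "admissible br"
    and Zcent: "Z = center_of br UNIV"
    and nilrad: "max_nilpotent_ideal br (ssum Z V)"
    and red: "reductive_on br L"
    and simples: "\<forall>I. simple_ideal br L I \<longrightarrow> compact_la br I \<or> hermitian_la br I"
    and TL: "cartan_in br L T" "compactly_embedded br L T"
    and Tg: "cartan_in br UNIV (ssum Z T)" "compactly_embedded br UNIV (ssum Z T)"
    and VT: "V = span {br t v | t v. t \<in> T \<and> v \<in> V}"
    and sympl: "\<exists>f::'g \<Rightarrow> real. linear f \<and>
                  (\<forall>v\<in>V. (\<forall>w\<in>V. f (br v w) = 0) \<longrightarrow> v = 0) \<and>
                  (\<exists>y\<in>L. \<forall>v\<in>V. v \<noteq> 0 \<longrightarrow> f (br (br y v) v) > 0)"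
    and pt: "pointed (co br x)"
  shows "orbit br x \<inter> ssum Z L \<noteq> {}"
proof -
  have bil: "bilinear br" and alt: "\<And>a. br a a = 0"
    and jac: "\<And>a b c. br a (br b c) + br b (br c a) + br c (br a b) = 0"
    using lie unfolding lie_algebra_def by auto
  have linr: "linear (br a)" for a using bil unfolding bilinear_def by auto
  have linl: "linear (\<lambda>b. br b a)" for a using bil unfolding bilinear_def by auto
  have radd: "br a (b + c) = br a b + br a c" for a b c using linear_add[OF linr] by simp
  have ladd: "br (a + b) c = br a c + br b c" for a b c using bilinear_ladd[OF bil] by simp
  have rscale: "br a (t *\<^sub>R b) = t *\<^sub>R br a b" for a b t using linear_scale[OF linr] by simp
  have lscale: "br (t *\<^sub>R a) b = t *\<^sub>R br a b" for a b t using bilinear_lmul[OF bil] by simp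
  have rminus: "br a (- b) = - br a b" for a b using linear_neg[OF linr] by simp
  have rdiff: "br a (b - c) = br a b - br a c" for a b c using linear_diff[OF linr] by simp
  have anti: "br a b = - br b a" for a b
  proof -
    have "0 = br (a + b) (a + b)" using alt by simp
    also have "\<dots> = br a b + br b a" by (simp only: ladd radd alt[of a] alt[of b] add_0_left add_0_right add.commute)
    finally have "br a b + br b a = 0" by simp
    then show ?thesis by (simp add: eq_neg_iff_add_eq_0)
  qed
  have cenl: "br c y = 0" if "c \<in> Z" for c y using that Zcent unfolding center_of_def by auto
  have cenr: "br y c = 0" if "c \<in> Z" for c y using cenl[OF that, of y] anti[of y c] by simp
  obtain z v l where zvl: "z \<in> Z" "v \<in> V" "l \<in> L" "x = z + v + l"
    using dsum[rule_format, of x] by (auto dest!: ex1_implies_ex)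
  obtain f :: "'g \<Rightarrow> real" where flin: "linear f"
    and nd: "\<And>a. a \<in> V \<Longrightarrow> (\<forall>w\<in>V. f (br a w) = 0) \<Longrightarrow> a = 0"
    using sympl by blast
  have fneg: "f (- a) = - f a" for a using linear_neg[OF flin] by simp
  have lV: "br l a \<in> V" if "a \<in> V" for a using LV zvl(3) that by blast
  have skew: "f (br (br l a) b) = - f (br a (br l b))" if "a \<in> V" "b \<in> V" for a b
  proof -
    have "br l (br a b) = 0" using cenr VV that by blast
    with jac[of l a b] have "br a (br b l) + br b (br l a) = 0" by simp
    then have "- br a (br l b) - br (br l a) b = 0"
      using anti[of b l] anti[of b "br l a"] rminus by simp
    then have "br (br l a) b = - br a (br l b)" by (simp add: algebra_simps)
    then show ?thesis using fneg by simp
  qed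
  define S where "S = br l ` V"
  have Ssub: "subspace S" unfolding S_def by (rule linear_subspace_image[OF linr subsp(2)])
  have SV: "S \<subseteq> V" unfolding S_def using lV by blast
  have vS: "v \<in> S"
  proof (rule ccontr)
    assume nv: "v \<notin> S"
    obtain s r where s: "s \<in> span S" and r: "\<And>w. w \<in> span S \<Longrightarrow> orthogonal r w"
      and vsr: "v = s + r"
      using orthogonal_subspace_decomp_exists by blast
    have sS: "s \<in> S" using s Ssub span_eq_iff by blast
    have rV: "r \<in> V" using vsr sS SV zvl(2) subspace_diff[OF subsp(2)]
      by (metis add_diff_cancel_left' subset_iff)
    have r0: "r \<noteq> 0" using nv vsr sS by auto
    obtain B where BV: "B \<subseteq> V" and Bo: "pairwise orthogonal B"
      and Bn: "\<And>b. b \<in> B \<Longrightarrow> norm b = 1" and Bi: "independent B" and Bs: "span B = V"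
      using orthonormal_basis_subspace[OF subsp(2)] by metis
    have Bf: "finite B" using Bi finiteI_independent by blast
    define K where "K a = (\<Sum>b\<in>B. f (br a b) *\<^sub>R b)" for a
    have Klin: "linear K"
    proof (rule linearI)
      fix a c show "K (a + c) = K a + K c"
        unfolding K_def by (simp add: ladd linear_add[OF flin] scaleR_add_left sum.distrib)
    next
      fix t a show "K (t *\<^sub>R a) = t *\<^sub>R K a"
        unfolding K_def by (simp add: lscale linear_scale[OF flin] scaleR_sum_right)
    qed
    have Kinner: "K a \<bullet> w = f (br a w)" if "w \<in> V" for a w
    proof -
      have "(\<lambda>w. K a \<bullet> w) w = (\<lambda>w. f (br a w)) w"
      proof (rule linear_eq_on_span[where B=B and f="\<lambda>w. K a \<bullet> w" and g="\<lambda>w. f (br a w)"])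
        show "linear (\<lambda>w. K a \<bullet> w)" using bounded_linear.linear[OF bounded_linear_inner_right[of "K a"]] by simp
        show "linear (\<lambda>w. f (br a w))" using linear_compose[OF linr flin] by (simp add: o_def)
        show "w \<in> span B" using Bs that by simp
      next
        fix c assume c: "c \<in> B"
        have "K a \<bullet> c = (\<Sum>b\<in>B. f (br a b) * (b \<bullet> c))"
          unfolding K_def by (simp add: inner_sum_left)
        also have "\<dots> = f (br a c) * (c \<bullet> c)"
          using Bo c Bf by (subst sum.remove[of B c]) (auto simp: pairwise_def orthogonal_def intro!: sum.neutral)
        also have "c \<bullet> c = 1" using Bn[OF c] by (simp add: power2_norm_eq_inner[symmetric])
        finally show "K a \<bullet> c = f (br a c)" by simp
      qed
      then show ?thesis by simp
    qed
    have KV: "K a \<in> V" for a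
    proof -
      have "K a \<in> span B" unfolding K_def by (intro span_sum span_scale span_base)
      then show ?thesis using Bs by simp
    qed
    have Kinj: "inj_on K (span V)"
    proof -
      have "span V = V" using subsp(2) span_eq_iff by blast
      moreover have "inj_on K V"
      proof (rule inj_onI)
        fix a c assume ac: "a \<in> V" "c \<in> V" "K a = K c"
        then have "K (a - c) = 0" using linear_diff[OF Klin] by simp
        then have "\<forall>w\<in>V. f (br (a - c) w) = 0" using Kinner by (metis inner_zero_left)
        then have "a - c = 0" using nd ac subspace_diff[OF subsp(2)] by blast
        then show "a = c" by simp
      qed
      ultimately show ?thesis by (metis (no_types))
    qed
    have "K ` V = V"
    proof (rule subspace_dim_equal)
      show "subspace (K ` V)" by (rule linear_subspace_image[OF Klin subsp(2)])
      show "subspace V" by (rule subsp(2))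
      show "K ` V \<subseteq> V" using KV by blast
      show "dim V \<le> dim (K ` V)" using dim_image_eq[OF Klin Kinj] by simp
    qed
    then obtain u where uV: "u \<in> V" and Ku: "K u = r" using rV by (metis imageE)
    have luV: "br l u \<in> V" using lV uV .
    have "\<forall>w\<in>V. f (br (br l u) w) = 0"
    proof
      fix w assume wV: "w \<in> V"
      have "br l w \<in> span S" using wV S_def span_base by blast
      then have "r \<bullet> br l w = 0" using r orthogonal_def by blast
      then have "f (br u (br l w)) = 0" using Kinner[of "br l w" u] lV wV Ku by simp
      then show "f (br (br l u) w) = 0" using skew uV wV by simp
    qed
    then have lu0: "br l u = 0" using nd luV by blast
    define c where "c = br u v"
    have cZ: "c \<in> Z" using VV uV zvl(2) c_def by blast
    have "f c = r \<bullet> v" using Kinner[OF zvl(2), of u] Ku c_def by simp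
    also have "\<dots> = r \<bullet> r" using vsr r[OF s] by (simp add: inner_add_right orthogonal_def)
    finally have "f c \<noteq> 0" using r0 by simp
    then have c0: "c \<noteq> 0" using linear_0[OF flin] by auto
    have ux: "br u x = c"
    proof -
      have "br u l = 0" using anti[of u l] lu0 by simp
      then show ?thesis using zvl(4) cenr[OF zvl(1)] radd c_def by simp
    qed
    have line: "x + t *\<^sub>R c \<in> co br x" for t
    proof -
      have e1: "br (t *\<^sub>R u) x = t *\<^sub>R c" using ux lscale by simp
      have e2: "br (t *\<^sub>R u) (t *\<^sub>R c) = 0" using cenr[OF cZ] lscale rscale by simp
      have "exp_ad br (t *\<^sub>R u) x = x + t *\<^sub>R c"
        by (subst exp_ad_trunc[OF linr]) (simp_all add: e1 e2 linear_0[OF linr])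
      then have "x + t *\<^sub>R c \<in> orbit br x" using exp_ad_in_orbit by metis
      then show ?thesis unfolding co_def
        by (meson closure_subset hull_subset subsetD)
    qed
    then show False using pt c0 unfolding pointed_def by blast
  qed
  then obtain w where wV: "w \<in> V" and lw: "br l w = v" using S_def by blast
  have wx: "br w x = br w v - v"
    using zvl(4) cenr[OF zvl(1)] radd anti[of w l] lw by simp
  have wvZ: "br w v \<in> Z" using VV wV zvl(2) by blast
  have wwx: "br w (br w v - v) = - br w v"
    using rdiff cenr[OF wvZ] by simp
  have "exp_ad br w x = x + (br w v - v) + (1/2) *\<^sub>R (- br w v)"
    by (subst exp_ad_trunc[OF linr]) (simp_all add: wx wwx rminus cenr[OF wvZ])
  also have "\<dots> = (z + (1/2) *\<^sub>R br w v) + l"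
  proof -
    have h: "br w v = (1/2) *\<^sub>R br w v + (1/2) *\<^sub>R br w v"
      by (simp add: scaleR_add_left[symmetric])
    show ?thesis using zvl(4) by (subst (1) h) (simp add: algebra_simps)
  qed
  finally have eq: "exp_ad br w x = (z + (1/2) *\<^sub>R br w v) + l" .
  have "z + (1/2) *\<^sub>R br w v \<in> Z"
    using subspace_add[OF subsp(1) zvl(1) subspace_scale[OF subsp(1) wvZ]] .
  then have "exp_ad br w x \<in> ssum Z L" unfolding ssum_def eq using zvl(3) by blast
  then show ?thesis using exp_ad_in_orbit by blast
qed

end
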